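(* Let $\mathbb{F}$ be an infinite field with $\operatorname{char}(\mathbb{F})\neq 2$, let $G$ be a group with a group involution $\ast$ and a non-trivial orientation $\sigma$ such that $gg^\ast\in N=\ker\sigma$ for all $g\in G$, and let $\circledast$ be the associated oriented involution of $\mathbb{F}G$. If $\mathbb{F}G$ is normal with respect to $\circledast$, then $N^+\subseteq\zeta(G)$.
   Context: A group involution on $G$ is a map $\ast:G\to G$ with $(gh)^\ast=h^\ast g^\ast$ and $(g^\ast)^\ast=g$. An orientation is a group homomorphism $\sigma:G\to\{\pm1\}$. The oriented involution is $(\sum_g\alpha_g g)^\circledast=\sum_g\alpha_g\sigma(g)g^\ast$ on $\mathbb{F}G$. $\mathbb{F}G$ is normal if $\alpha\alpha^\circledast=\alpha^\circledast\alpha$ for all $\alpha\in\mathbb{F}G$. $N^+$ denotes the set of elements $g\in G$ with $g^\circledast=g$, i.e. $N^+=\{n\in N: n^\ast=n\}$. $\zeta(G)$ is the center of $G$. *)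

theory Defs
  imports "HOL-Algebra.Group"
begin

definition group_ring :: "('g, 'b) monoid_scheme \<Rightarrow> ('g \<Rightarrow> 'f::field) set" where
  "group_ring G = {a. (\<forall>x. x \<notin> carrier G \<longrightarrow> a x = 0) \<and> finite {x. a x \<noteq> 0}}"

definition gr_mult :: "('g, 'b) monoid_scheme \<Rightarrow> ('g \<Rightarrow> 'f::field) \<Rightarrow> ('g \<Rightarrow> 'f) \<Rightarrow> ('g \<Rightarrow> 'f)" where
  "gr_mult G a b = (\<lambda>x. if x \<in> carrier G
      then (\<Sum>g\<in>{g \<in> carrier G. a g \<noteq> 0}. a g * b (inv\<^bsub>G\<^esub> g \<otimes>\<^bsub>G\<^esub> x)) else 0)"

definition group_involution :: "('g, 'b) monoid_scheme \<Rightarrow> ('g \<Rightarrow> 'g) \<Rightarrow> bool" where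
  "group_involution G s \<longleftrightarrow> (\<forall>g\<in>carrier G. s g \<in> carrier G) \<and>
     (\<forall>g\<in>carrier G. \<forall>h\<in>carrier G. s (g \<otimes>\<^bsub>G\<^esub> h) = s h \<otimes>\<^bsub>G\<^esub> s g) \<and>
     (\<forall>g\<in>carrier G. s (s g) = g)"

definition orientation :: "('g, 'b) monoid_scheme \<Rightarrow> ('g \<Rightarrow> int) \<Rightarrow> bool" where
  "orientation G \<sigma> \<longleftrightarrow> (\<forall>g\<in>carrier G. \<sigma> g = 1 \<or> \<sigma> g = -1) \<and>
     (\<forall>g\<in>carrier G. \<forall>h\<in>carrier G. \<sigma> (g \<otimes>\<^bsub>G\<^esub> h) = \<sigma> g * \<sigma> h)"

text \<open>Oriented involution: (\<Sum> a_g g)^\<circledast> = \<Sum> a_g \<sigma>(g) g^*; the coefficient at x is \<sigma>(x^*) a(x^*).\<close>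
definition oriented_inv :: "('g, 'b) monoid_scheme \<Rightarrow> ('g \<Rightarrow> 'g) \<Rightarrow> ('g \<Rightarrow> int) \<Rightarrow> ('g \<Rightarrow> 'f::field) \<Rightarrow> ('g \<Rightarrow> 'f)" where
  "oriented_inv G s \<sigma> a = (\<lambda>x. if x \<in> carrier G then of_int (\<sigma> (s x)) * a (s x) else 0)"

definition group_center :: "('g, 'b) monoid_scheme \<Rightarrow> 'g set" where
  "group_center G = {z \<in> carrier G. \<forall>g\<in>carrier G. z \<otimes>\<^bsub>G\<^esub> g = g \<otimes>\<^bsub>G\<^esub> z}"

end

theory Submission
  imports Defs
begin

definition dl :: "'g \<Rightarrow> 'g \<Rightarrow> 'f::field" where
  "dl u = (\<lambda>z. if z = u then 1 else 0)"

lemma gr_mult_superset: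
  assumes "finite S" "S \<subseteq> carrier G" "{g \<in> carrier G. a g \<noteq> 0} \<subseteq> S" "x \<in> carrier G"
  shows "gr_mult G a b x = (\<Sum>g\<in>S. a g * b (inv\<^bsub>G\<^esub> g \<otimes>\<^bsub>G\<^esub> x))"
  unfolding gr_mult_def using assms
  by (auto intro!: sum.mono_neutral_left)

lemma supp_finite: "a \<in> group_ring G \<Longrightarrow> finite {g \<in> carrier G. a g \<noteq> 0}"
  unfolding group_ring_def by (auto intro: finite_subset)

lemma gr_mult_add_left:
  assumes "a \<in> group_ring G" "b \<in> group_ring G"
  shows "gr_mult G (\<lambda>z. a z + b z) c = (\<lambda>z. gr_mult G a c z + gr_mult G b c z)"
proof
  fix x
  let ?S = "{g \<in> carrier G. a g \<noteq> 0} \<union> {g \<in> carrier G. b g \<noteq> 0}"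
  have f: "finite ?S" using supp_finite assms by blast
  show "gr_mult G (\<lambda>z. a z + b z) c x = (\<lambda>z. gr_mult G a c z + gr_mult G b c z) x"
  proof (cases "x \<in> carrier G")
    case True
    have "gr_mult G (\<lambda>z. a z + b z) c x = (\<Sum>g\<in>?S. (a g + b g) * c (inv\<^bsub>G\<^esub> g \<otimes>\<^bsub>G\<^esub> x))"
      by (rule gr_mult_superset[OF f _ _ True]) auto
    also have "\<dots> = (\<Sum>g\<in>?S. a g * c (inv\<^bsub>G\<^esub> g \<otimes>\<^bsub>G\<^esub> x)) + (\<Sum>g\<in>?S. b g * c (inv\<^bsub>G\<^esub> g \<otimes>\<^bsub>G\<^esub> x))"
      by (simp add: distrib_right sum.distrib)
    also have "\<dots> = gr_mult G a c x + gr_mult G b c x"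
      using gr_mult_superset[OF f _ _ True, of a c] gr_mult_superset[OF f _ _ True, of b c] by auto
    finally show ?thesis by simp
  qed (simp add: gr_mult_def)
qed

lemma gr_mult_add_right:
  "gr_mult G a (\<lambda>z. b z + c z) = (\<lambda>z. gr_mult G a b z + gr_mult G a c z)"
  unfolding gr_mult_def by (auto simp: distrib_left sum.distrib)

lemma oriented_inv_add: "oriented_inv G s \<sigma> (\<lambda>z. a z + b z) = (\<lambda>z. oriented_inv G s \<sigma> a z + oriented_inv G s \<sigma> b z)"
  unfolding oriented_inv_def by (auto simp: algebra_simps)

lemma dl_group_ring: "u \<in> carrier G \<Longrightarrow> (dl u :: 'g \<Rightarrow> 'f::field) \<in> group_ring G"
  unfolding group_ring_def dl_def by auto

lemma add_group_ring:
  assumes "a \<in> group_ring G" "b \<in> group_ring G"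
  shows "(\<lambda>z. a z + b z) \<in> group_ring G"
proof -
  have "{x. a x + b x \<noteq> 0} \<subseteq> {x. a x \<noteq> 0} \<union> {x. b x \<noteq> 0}" by auto
  moreover have "finite ({x. a x \<noteq> 0} \<union> {x. b x \<noteq> 0})"
    using assms unfolding group_ring_def by simp
  ultimately have "finite {x. a x + b x \<noteq> 0}" by (rule finite_subset)
  then show ?thesis using assms unfolding group_ring_def by simp
qed

lemma oriented_inv_group_ring:
  assumes "group_involution G s" "a \<in> group_ring G"
  shows "oriented_inv G s \<sigma> a \<in> group_ring G"
proof -
  have "{x. oriented_inv G s \<sigma> a x \<noteq> 0} \<subseteq> s ` {x. a x \<noteq> 0}"
  proof
    fix x assume "x \<in> {x. oriented_inv G s \<sigma> a x \<noteq> 0}"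
    then have h: "oriented_inv G s \<sigma> a x \<noteq> 0" by simp
    then have x: "x \<in> carrier G" unfolding oriented_inv_def by (cases "x \<in> carrier G") simp_all
    from h x have "a (s x) \<noteq> 0" unfolding oriented_inv_def by simp
    have ss: "s (s x) = x" using x assms(1) unfolding group_involution_def by simp
    have "s x \<in> {x. a x \<noteq> 0}" using \<open>a (s x) \<noteq> 0\<close> by simp
    then have "s (s x) \<in> s ` {x. a x \<noteq> 0}" by (rule imageI)
    then show "x \<in> s ` {x. a x \<noteq> 0}" using ss by simp
  qed
  moreover have "finite (s ` {x. a x \<noteq> 0})" using assms(2) unfolding group_ring_def by simp
  ultimately have "finite {x. oriented_inv G s \<sigma> a x \<noteq> 0}" by (rule finite_subset)
  moreover have "\<forall>x. x \<notin> carrier G \<longrightarrow> oriented_inv G s \<sigma> a x = 0"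
    unfolding oriented_inv_def by simp
  ultimately show ?thesis unfolding group_ring_def by blast
qed

lemma gr_mult_dl_left:
  assumes "u \<in> carrier G" "x \<in> carrier G"
  shows "gr_mult G (dl u) b x = b (inv\<^bsub>G\<^esub> u \<otimes>\<^bsub>G\<^esub> x)"
  using gr_mult_superset[of "{u}" G "dl u" x b] assms by (auto simp: dl_def)

lemma gr_mult_dl_right:
  fixes G :: "('g, 'b) monoid_scheme" (structure)
  assumes "group G" "a \<in> group_ring G" "v \<in> carrier G" "x \<in> carrier G"
  shows "gr_mult G a (dl v) x = a (x \<otimes>\<^bsub>G\<^esub> inv\<^bsub>G\<^esub> v)"
proof -
  interpret group G by fact
  let ?w = "x \<otimes> inv v"
  let ?S = "insert ?w {g \<in> carrier G. a g \<noteq> 0}"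
  have f: "finite ?S" using supp_finite assms by blast
  have w: "?w \<in> carrier G" using assms by simp
  have "gr_mult G a (dl v) x = (\<Sum>g\<in>?S. a g * dl v (inv g \<otimes> x))"
    by (rule gr_mult_superset[OF f _ _ assms(4)]) (use w in auto)
  also have "\<dots> = (\<Sum>g\<in>?S. if g = ?w then a g else 0)"
  proof (rule sum.cong)
    fix g assume "g \<in> ?S"
    then have g: "g \<in> carrier G" using w by auto
    have "(inv g \<otimes> x = v) = (g = ?w)"
      using g assms by (metis inv_solve_left inv_solve_right inv_closed inv_inv)
    then show "a g * dl v (inv g \<otimes> x) = (if g = ?w then a g else 0)"
      by (simp add: dl_def)
  qed simp
  also have "\<dots> = a ?w" using f by simp
  finally show ?thesis .
qed


lemma oriented_inv_dl:
  assumes "group_involution G s" "u \<in> carrier G" "z \<in> carrier G"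
  shows "oriented_inv G s \<sigma> (dl u :: 'g \<Rightarrow> 'f::field) z = (if z = s u then of_int (\<sigma> u) else 0)"
proof -
  have "s (s z) = z" "s (s u) = u" using assms unfolding group_involution_def by simp_all
  then have "(s z = u) = (z = s u)" by metis
  then show ?thesis using assms(3) unfolding oriented_inv_def dl_def by auto
qed

lemma key:
  fixes G :: "('g, 'b) monoid_scheme" (structure)
  assumes grp: "group G" and inv: "group_involution G s"
    and nor: "\<forall>a\<in>(group_ring G :: ('g \<Rightarrow> 'f::field) set).
           gr_mult G a (oriented_inv G s \<sigma> a) = gr_mult G (oriented_inv G s \<sigma> a) a"
    and n: "n \<in> carrier G" "\<sigma> n = 1" "s n = n"
    and y: "y \<in> carrier G" and p: "p \<in> carrier G"
  shows "(if p = n \<otimes> s y then (of_int (\<sigma> y) :: 'f) else 0) + (if p = y \<otimes> n then 1 else 0)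
       = (if p = n \<otimes> y then 1 else 0) + (if p = s y \<otimes> n then of_int (\<sigma> y) else 0)"
proof -
  interpret group G by (rule grp)
  define A :: "'g \<Rightarrow> 'f" where "A = dl n"
  define B :: "'g \<Rightarrow> 'f" where "B = dl y"
  define As where "As = oriented_inv G s \<sigma> A"
  define Bs where "Bs = oriented_inv G s \<sigma> B"
  have Ag: "A \<in> group_ring G" unfolding A_def using n(1) by (rule dl_group_ring)
  have Bg: "B \<in> group_ring G" unfolding B_def using y by (rule dl_group_ring)
  have Asg: "As \<in> group_ring G" unfolding As_def using inv Ag by (rule oriented_inv_group_ring)
  have Bsg: "Bs \<in> group_ring G" unfolding Bs_def using inv Bg by (rule oriented_inv_group_ring)
  have ABg: "(\<lambda>z. A z + B z) \<in> group_ring G" using Ag Bg by (rule add_group_ring)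
  have NA: "gr_mult G A As p = gr_mult G As A p" using nor Ag unfolding As_def by simp
  have NB: "gr_mult G B Bs p = gr_mult G Bs B p" using nor Bg unfolding Bs_def by simp
  have NAB: "gr_mult G (\<lambda>z. A z + B z) (\<lambda>z. As z + Bs z) p = gr_mult G (\<lambda>z. As z + Bs z) (\<lambda>z. A z + B z) p"
  proof -
    have "gr_mult G (\<lambda>z. A z + B z) (oriented_inv G s \<sigma> (\<lambda>z. A z + B z))
        = gr_mult G (oriented_inv G s \<sigma> (\<lambda>z. A z + B z)) (\<lambda>z. A z + B z)"
      using nor ABg by blast
    then show ?thesis unfolding As_def Bs_def oriented_inv_add by simp
  qed
  have L: "gr_mult G (\<lambda>z. A z + B z) (\<lambda>z. As z + Bs z) p
     = gr_mult G A As p + gr_mult G A Bs p + gr_mult G B As p + gr_mult G B Bs p"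
    by (simp add: gr_mult_add_left[OF Ag Bg] gr_mult_add_right)
  have R: "gr_mult G (\<lambda>z. As z + Bs z) (\<lambda>z. A z + B z) p
     = gr_mult G As A p + gr_mult G As B p + gr_mult G Bs A p + gr_mult G Bs B p"
    by (simp add: gr_mult_add_left[OF Asg Bsg] gr_mult_add_right)
  have E: "gr_mult G A Bs p + gr_mult G B As p = gr_mult G As B p + gr_mult G Bs A p"
    using NA NB NAB L R by (simp add: algebra_simps)
  have Asz: "As z = (if z = n then 1 else 0)" if "z \<in> carrier G" for z
    unfolding As_def A_def by (simp add: oriented_inv_dl[OF inv n(1) that] n)
  have Bsz: "Bs z = (if z = s y then of_int (\<sigma> y) else 0)" if "z \<in> carrier G" for z
    unfolding Bs_def B_def by (simp add: oriented_inv_dl[OF inv y that])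
  have sy: "s y \<in> carrier G" using inv y unfolding group_involution_def by simp
  have 1: "gr_mult G A Bs p = (if p = n \<otimes> s y then of_int (\<sigma> y) else 0)"
    unfolding A_def using n p sy by (simp add: gr_mult_dl_left[OF n(1) p] Bsz inv_solve_left')
  have 2: "gr_mult G B As p = (if p = y \<otimes> n then 1 else 0)"
    unfolding B_def using n p y by (simp add: gr_mult_dl_left[OF y p] Asz inv_solve_left')
  have 3: "gr_mult G As B p = (if p = n \<otimes> y then 1 else 0)"
    unfolding B_def using n p y by (simp add: gr_mult_dl_right[OF grp Asg y p] Asz inv_solve_right')
  have 4: "gr_mult G Bs A p = (if p = s y \<otimes> n then of_int (\<sigma> y) else 0)"
    unfolding A_def using n p sy by (simp add: gr_mult_dl_right[OF grp Bsg n(1) p] Bsz inv_solve_right')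
  show ?thesis using E 1 2 3 4 by simp
qed


lemma lemma8_aux:
  fixes G :: "('g, 'b) monoid_scheme" (structure) and s :: "'g \<Rightarrow> 'g" and \<sigma> :: "'g \<Rightarrow> int"
  assumes "group G"
    and "infinite (UNIV :: 'f::field set)"
    and "(2::'f) \<noteq> 0"
    and "group_involution G s"
    and "orientation G \<sigma>"
    and "\<exists>g\<in>carrier G. \<sigma> g \<noteq> 1"
    and "\<forall>g\<in>carrier G. \<sigma> (g \<otimes> s g) = 1"
    and "\<forall>a\<in>(group_ring G :: ('g \<Rightarrow> 'f) set).
           gr_mult G a (oriented_inv G s \<sigma> a) = gr_mult G (oriented_inv G s \<sigma> a) a"
  shows "{n \<in> carrier G. \<sigma> n = 1 \<and> s n = n} \<subseteq> group_center G"
proof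
  interpret group G by (rule assms(1))
  have two: "(2::'f) \<noteq> 0" by (rule assms(3))
  have m1: "(-1::'f) \<noteq> 1" using two by (metis add_eq_0_iff one_add_one)
  have sc: "s g \<in> carrier G" if "g \<in> carrier G" for g
    using assms(4) that unfolding group_involution_def by simp
  have smul: "s (g \<otimes> h) = s h \<otimes> s g" if "g \<in> carrier G" "h \<in> carrier G" for g h
    using assms(4) that unfolding group_involution_def by simp
  have spm: "\<sigma> g = 1 \<or> \<sigma> g = -1" if "g \<in> carrier G" for g
    using assms(5) that unfolding orientation_def by simp
  have smu: "\<sigma> (g \<otimes> h) = \<sigma> g * \<sigma> h" if "g \<in> carrier G" "h \<in> carrier G" for g h
    using assms(5) that unfolding orientation_def by simp
  fix n assume "n \<in> {n \<in> carrier G. \<sigma> n = 1 \<and> s n = n}"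
  then have n: "n \<in> carrier G" "\<sigma> n = 1" "s n = n" by auto
  note K = key[OF assms(1) assms(4) assms(8) n]
  have F1: "n \<otimes> y = y \<otimes> n" if y: "y \<in> carrier G" "\<sigma> y = -1" "s y = y" for y
  proof (rule ccontr)
    assume c: "n \<otimes> y \<noteq> y \<otimes> n"
    have "(if n \<otimes> y = n \<otimes> s y then (of_int (\<sigma> y) :: 'f) else 0) + (if n \<otimes> y = y \<otimes> n then 1 else 0)
       = (if n \<otimes> y = n \<otimes> y then 1 else 0) + (if n \<otimes> y = s y \<otimes> n then of_int (\<sigma> y) else 0)"
      using K[OF y(1) m_closed[OF n(1) y(1)]] n y by simp
    then have "(-1::'f) = 1" using y c by simp
    then show False using m1 by simp
  qed
  have F2: "n \<otimes> y = y \<otimes> n" if y: "y \<in> carrier G" "\<sigma> y = 1" "s y \<noteq> y" for y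
  proof (rule ccontr)
    assume c: "n \<otimes> y \<noteq> y \<otimes> n"
    have ne: "n \<otimes> y \<noteq> n \<otimes> s y" using y n sc[OF y(1)] by simp
    have "(if n \<otimes> y = n \<otimes> s y then (of_int (\<sigma> y) :: 'f) else 0) + (if n \<otimes> y = y \<otimes> n then 1 else 0)
       = (if n \<otimes> y = n \<otimes> y then 1 else 0) + (if n \<otimes> y = s y \<otimes> n then of_int (\<sigma> y) else 0)"
      using K[OF y(1) m_closed[OF n(1) y(1)]] n y by simp
    then show False using two y c ne by (cases "n \<otimes> y = s y \<otimes> n") simp_all
  qed
  have F3: "y \<otimes> n = n \<otimes> s y" if y: "y \<in> carrier G" "\<sigma> y = -1" "s y \<noteq> y" "n \<otimes> y \<noteq> y \<otimes> n" for y
  proof (rule ccontr)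
    assume c: "y \<otimes> n \<noteq> n \<otimes> s y"
    have ne: "y \<otimes> n \<noteq> s y \<otimes> n" using y n sc[OF y(1)] by simp
    have "(if y \<otimes> n = n \<otimes> s y then (of_int (\<sigma> y) :: 'f) else 0) + (if y \<otimes> n = y \<otimes> n then 1 else 0)
       = (if y \<otimes> n = n \<otimes> y then 1 else 0) + (if y \<otimes> n = s y \<otimes> n then of_int (\<sigma> y) else 0)"
      using K[OF y(1) m_closed[OF y(1) n(1)]] n y by simp
    then have "(1::'f) = 0" using y c ne by (simp split: if_splits)
    then show False by simp
  qed
  show "n \<in> group_center G" unfolding group_center_def
  proof (intro CollectI conjI ballI)
    show "n \<in> carrier G" by (rule n(1))
    fix g assume g: "g \<in> carrier G"
    have gn: "g \<otimes> n \<in> carrier G" using g n by simp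
    have sgn: "s (g \<otimes> n) = n \<otimes> s g" using smul[OF g n(1)] n by simp
    have sign: "\<sigma> (g \<otimes> n) = \<sigma> g" using smu[OF g n(1)] n by simp
    have canc: "n \<otimes> g = g \<otimes> n" if "n \<otimes> (g \<otimes> n) = (g \<otimes> n) \<otimes> n"
      using that g n by (metis m_assoc m_closed right_cancel)
    show "n \<otimes> g = g \<otimes> n"
    proof (cases "\<sigma> g = 1")
      case True
      show ?thesis
      proof (cases "s g = g")
        case False then show ?thesis using F2 g True by blast
      next
        case sg: True
        show ?thesis
        proof (rule ccontr)
          assume c: "n \<otimes> g \<noteq> g \<otimes> n"
          have "s (g \<otimes> n) \<noteq> g \<otimes> n" using sgn sg c by simp
          then have "n \<otimes> (g \<otimes> n) = (g \<otimes> n) \<otimes> n" using F2[OF gn] sign True by simp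
          then show False using canc c by simp
        qed
      qed
    next
      case False
      then have m: "\<sigma> g = -1" using spm[OF g] by simp
      show ?thesis
      proof (cases "s g = g")
        case True then show ?thesis using F1 g m by blast
      next
        case sg: False
        show ?thesis
        proof (rule ccontr)
          assume c: "n \<otimes> g \<noteq> g \<otimes> n"
          have e: "g \<otimes> n = n \<otimes> s g" using F3[OF g m sg c] .
          have "n \<otimes> (g \<otimes> n) = (g \<otimes> n) \<otimes> n" using F1[OF gn] sign m sgn e by simp
          then show False using canc c by simp
        qed
      qed
    qed
  qed
qed


theorem lemma8:
  fixes G :: "('g, 'b) monoid_scheme" and s :: "'g \<Rightarrow> 'g" and \<sigma> :: "'g \<Rightarrow> int"
  assumes "group G"
    and "infinite (UNIV :: 'f::field set)"
    and "(2::'f) \<noteq> 0"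
    and "group_involution G s"
    and "orientation G \<sigma>"
    and "\<exists>g\<in>carrier G. \<sigma> g \<noteq> 1"
    and "\<forall>g\<in>carrier G. \<sigma> (g \<otimes>\<^bsub>G\<^esub> s g) = 1"
    and "\<forall>a\<in>(group_ring G :: ('g \<Rightarrow> 'f) set).
           gr_mult G a (oriented_inv G s \<sigma> a) = gr_mult G (oriented_inv G s \<sigma> a) a"
  shows "{n \<in> carrier G. \<sigma> n = 1 \<and> s n = n} \<subseteq> group_center G"
  using assms by (rule lemma8_aux)

end
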